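(* Let $R$ be an abelian $\star$-ring such that for every $r\in Reg(R)$ and every $y\in R$, whenever $ry$ is idempotent it is a projection and whenever $yr$ is idempotent it is a projection. Then $R$ is $\star$-$r$-clean if and only if $R$ is $\star$-clean.
   Context: Rings are associative with identity; $R$ is abelian if all its idempotents are central. A $\star$-ring is a ring $R$ with a map $\star:R\to R$ satisfying $(x+y)^\star=x^\star+y^\star$, $(xy)^\star=y^\star x^\star$, $(x^\star)^\star=x$. A projection is $p\in R$ with $p^2=p=p^\star$; $P(R)$ denotes the set of projections. $U(R)$ denotes the units and $Reg(R)=\{r\in R: r=ryr \text{ for some } y\in R\}$ the regular elements. $R$ is $\star$-clean if every $x\in R$ can be written $x=u+p$ with $u\in U(R)$, $p\in P(R)$. $R$ is $\star$-$r$-clean if every $x\in R$ can be written $x=r+p$ with $r\in Reg(R)$, $p\in P(R)$. *)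

theory Defs
  imports Main
begin

definition star_ring :: "('a::ring_1 \<Rightarrow> 'a) \<Rightarrow> bool" where
  "star_ring st \<longleftrightarrow>
     (\<forall>x y. st (x + y) = st x + st y) \<and>
     (\<forall>x y. st (x * y) = st y * st x) \<and>
     (\<forall>x. st (st x) = x)"

definition idempotent :: "'a::ring_1 \<Rightarrow> bool" where
  "idempotent e \<longleftrightarrow> e * e = e"

definition abelian_ring :: "'a::ring_1 itself \<Rightarrow> bool" where
  "abelian_ring _ \<longleftrightarrow> (\<forall>e::'a. idempotent e \<longrightarrow> (\<forall>x. e * x = x * e))"

definition projection :: "('a::ring_1 \<Rightarrow> 'a) \<Rightarrow> 'a \<Rightarrow> bool" where
  "projection st p \<longleftrightarrow> p * p = p \<and> p = st p"

definition is_unit :: "'a::ring_1 \<Rightarrow> bool" where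
  "is_unit u \<longleftrightarrow> (\<exists>v. u * v = 1 \<and> v * u = 1)"

definition regular :: "'a::ring_1 \<Rightarrow> bool" where
  "regular r \<longleftrightarrow> (\<exists>y. r = r * y * r)"

definition star_clean :: "('a::ring_1 \<Rightarrow> 'a) \<Rightarrow> bool" where
  "star_clean st \<longleftrightarrow> (\<forall>x. \<exists>u p. is_unit u \<and> projection st p \<and> x = u + p)"

definition star_r_clean :: "('a::ring_1 \<Rightarrow> 'a) \<Rightarrow> bool" where
  "star_r_clean st \<longleftrightarrow> (\<forall>x. \<exists>r p. regular r \<and> projection st p \<and> x = r + p)"

end

theory Submission
  imports Defs
begin

lemma unit_regular: "is_unit (u::'a::ring_1) \<Longrightarrow> regular u"
  unfolding is_unit_def regular_def by (metis mult.assoc mult_1_right)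

lemma st_one: assumes "star_ring st" shows "st 1 = (1::'a::ring_1)"
proof -
  have m: "\<And>x y. st (x * y) = st y * st x" and i: "\<And>x. st (st x) = x"
    using assms unfolding star_ring_def by auto
  have "st (st 1 * 1) = st 1 * st (st 1)" by (rule m)
  hence "1 = st 1 * 1" using i by simp
  thus ?thesis by simp
qed

lemma st_add_lin: assumes "star_ring st"
  shows "st (x - y) = st x - st (y::'a::ring_1)"
proof -
  have a: "\<And>x y. st (x + y) = st x + st y" using assms unfolding star_ring_def by auto
  have "st (x - y) + st y = st x" using a[of "x-y" y] by simp
  thus ?thesis by (simp add: eq_diff_eq)
qed

theorem theorem4p17:
  fixes st :: "'a::ring_1 \<Rightarrow> 'a"
  assumes "star_ring st"
    and "abelian_ring TYPE('a)"
    and "\<And>r y. regular r \<Longrightarrow> idempotent (r * y) \<Longrightarrow> projection st (r * y)"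
    and "\<And>r y. regular r \<Longrightarrow> idempotent (y * r) \<Longrightarrow> projection st (y * r)"
  shows "star_r_clean st \<longleftrightarrow> star_clean st"
proof
  assume "star_clean st" thus "star_r_clean st"
    unfolding star_clean_def star_r_clean_def using unit_regular by blast
next
  assume rc: "star_r_clean st"
  have cen: "\<And>e x. e * e = e \<Longrightarrow> e * x = x * (e::'a)"
    using assms(2) unfolding abelian_ring_def idempotent_def by blast
  have sa: "\<And>x y. st (x + y) = st x + st y" and sm: "\<And>x y. st (x * y) = st y * st x"
    using assms(1) unfolding star_ring_def by auto
  show "star_clean st"
    unfolding star_clean_def
  proof
    fix x
    obtain r p where reg: "regular r" and pp: "projection st p" and x: "x = r + p"
      using rc unfolding star_r_clean_def by blast
    obtain y where ry: "r = r * y * r" using reg unfolding regular_def by blast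
    define z where "z = y * r * y"
    have h: "\<And>w. r * (y * (r * w)) = r * w" using ry by (metis mult.assoc)
    have rzr: "r * z * r = r" unfolding z_def using ry by (simp add: mult.assoc h)
    have zrz: "z * r * z = z" unfolding z_def by (simp add: mult.assoc h)
    define e where "e = r * z"
    define f where "f = z * r"
    have ee: "e * e = e" unfolding e_def by (metis rzr mult.assoc)
    have ff: "f * f = f" unfolding f_def by (metis zrz mult.assoc)
    have er: "e * r = r" unfolding e_def using rzr by simp
    have re: "r * e = r" using er cen[OF ee] by metis
    have rf: "r * f = r" unfolding f_def using rzr by (simp add: mult.assoc)
    have fr: "f * r = r" using rf cen[OF ff] by metis
    have ze: "z * e = z" unfolding e_def using zrz by (simp add: mult.assoc)
    have ez: "e * z = z" using ze cen[OF ee] by metis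
    have e1: "e = f * e" unfolding e_def using fr by (metis mult.assoc)
    have f1: "f = f * e" unfolding f_def by (metis er mult.assoc cen[OF ee])
    have zr: "z * r = e" using e1 f1 f_def by simp
    have pe: "projection st e" using assms(3)[OF reg, of z] ee
      unfolding e_def idempotent_def by simp
    have stp: "st p = p" and ppp: "p * p = p" using pp unfolding projection_def by auto
    have ste: "st e = e" using pe unfolding projection_def by auto
    define w where "w = p + p - 1"
    define c where "c = 1 - e"
    have ww: "w * w = 1" unfolding w_def by (simp add: algebra_simps ppp)
    have wc: "\<And>a. w * a = a * w" unfolding w_def using cen[OF ppp]
      by (simp add: algebra_simps)
    have cc: "c * c = c" unfolding c_def by (simp add: algebra_simps ee)
    have cx: "\<And>a. c * a = a * c" using cen[OF cc] .
    have rc0: "r * c = 0" unfolding c_def by (simp add: algebra_simps re)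
    have cr0: "c * r = 0" unfolding c_def by (simp add: algebra_simps er)
    have zc0: "z * c = 0" unfolding c_def by (simp add: algebra_simps ze)
    have cz0: "c * z = 0" unfolding c_def by (simp add: algebra_simps ez)
    define g where "g = w * c"
    have rg: "r * g = 0" unfolding g_def by (metis mult.assoc wc rc0 mult_zero_right)
    have gr: "g * r = 0" unfolding g_def by (metis mult.assoc cr0 mult_zero_right)
    have zg: "z * g = 0" unfolding g_def by (metis mult.assoc wc zc0 mult_zero_right)
    have gz: "g * z = 0" unfolding g_def by (metis mult.assoc cz0 mult_zero_right)
    have gg: "g * g = c" unfolding g_def
      by (metis mult.assoc wc ww cc mult_1_left)
    have uv: "(r + g) * (z + g) = 1"
      by (simp add: algebra_simps rg gz gg e_def[symmetric] c_def)
    have vu: "(z + g) * (r + g) = 1"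
      by (simp add: algebra_simps zg gr gg zr c_def)
    have unit: "is_unit (r + g)" unfolding is_unit_def using uv vu by blast
    define q where "q = p * e + (1 - p) * c"
    have pc: "\<And>a. p * a = a * p" using cen[OF ppp] .
    have ec: "\<And>a. e * a = a * e" using cen[OF ee] .
    have pec: "p * e * ((1 - p) * c) = 0"
    proof -
      have "p * e * ((1 - p) * c) = (p * (1 - p)) * (e * c)"
        by (metis mult.assoc ec)
      also have "p * (1 - p) = 0" by (simp add: algebra_simps ppp)
      finally show ?thesis by simp
    qed
    have pec2: "(1 - p) * c * (p * e) = 0"
    proof -
      have "(1 - p) * c * (p * e) = ((1 - p) * p) * (c * e)"
        by (metis mult.assoc cx)
      also have "(1 - p) * p = 0" by (simp add: algebra_simps ppp)
      finally show ?thesis by simp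
    qed
    have pepe: "p * e * (p * e) = p * e"
      by (metis mult.assoc ec ppp ee)
    have pp1: "(1 - p) * (1 - p) = 1 - p" by (simp add: algebra_simps ppp)
    have cpcp: "(1 - p) * c * ((1 - p) * c) = (1 - p) * c"
      by (metis mult.assoc cx pp1 cc)
    have qq: "q * q = q" unfolding q_def
      by (simp add: distrib_left distrib_right pec pec2 pepe cpcp)
    have st1: "st 1 = 1" using st_one[OF assms(1)] .
    have stc: "st c = c" unfolding c_def by (simp add: st_add_lin[OF assms(1)] st1 ste)
    have st1p: "st (1 - p) = 1 - p" by (simp add: st_add_lin[OF assms(1)] st1 stp)
    have stq: "st q = q" unfolding q_def
      by (simp add: sa sm stc st1p ste stp ec cx)
    have pq: "projection st q" unfolding projection_def using qq stq by simp
    have sum: "x = (r + g) + q" unfolding x g_def q_def w_def c_def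
      by (simp add: algebra_simps)
    show "\<exists>u p. is_unit u \<and> projection st p \<and> x = u + p"
      using unit pq sum by blast
  qed
qed

end
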